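(* Let $K\ge0$ satisfy: $|K(u)|\le\bar K<\infty$, $\int_{\mathbb R}|K(u)|^sdu<\infty$ for some $s>2$, $K(u)=0$ for $|u|>1$, and $|K(u)-K(u')|\le\Lambda_1|u-u'|$ for all $u,u'\in\mathbb R$ with some $1\le\Lambda_1<\infty$. For $x\in[0,1]$ let $G_x=[-1,0]$ if $x=1$, $[-1,1]$ if $x\in(0,1)$, $[0,1]$ if $x=0$, and suppose $\mu(\{u\in G_x:K(u)>0\})>0$ for every $x\in[0,1]$ ($\mu$ Lebesgue measure). Let $$S_{T,x}=\frac1T\sum_{t=1}^TK_h(t/T-x)\begin{pmatrix}1&\frac{t/T-x}{h}\\ \frac{t/T-x}{h}&(\frac{t/T-x}{h})^2\end{pmatrix},$$ with $K_h(u)=K(u/h)/h$, $h=h_T>0$, $h\to0$, $Th\to\infty$. Then there exists $\lambda_0>0$ such that, for all $v\in\mathbb R^2$ and all sufficiently large $T$, $$\sup_{x\in[0,1]}\|S_{T,x}^{-1}v\|\le\frac1{\lambda_0}\|v\|,$$ where $\|\cdot\|$ is the Euclidean norm on $\mathbb R^2$. *)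

theory Defs
  imports "HOL-Analysis.Analysis"
begin

definition Gset :: "real \<Rightarrow> real set" where
  "Gset x = (if x = 1 then {-1..0} else if x = 0 then {0..1} else {-1..1})"

definition Kh :: "(real \<Rightarrow> real) \<Rightarrow> real \<Rightarrow> real \<Rightarrow> real" where
  "Kh K h u = K (u / h) / h"

definition locmat :: "real \<Rightarrow> real^2^2" where
  "locmat a = (\<chi> i j. (if i = 1 then 1 else a) * (if j = 1 then 1 else a))"

definition Smat :: "(real \<Rightarrow> real) \<Rightarrow> real \<Rightarrow> nat \<Rightarrow> real \<Rightarrow> real^2^2" where
  "Smat K h T x = (1 / real T) *\<^sub>R
     (\<Sum>t = 1..T. Kh K h (real t / real T - x) *\<^sub>R locmat ((real t / real T - x) / h))"

end

theory Submission
  imports Defs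
begin


lemma qf_sum: "finite A \<Longrightarrow> (c::real^'n) \<bullet> ((\<Sum>t\<in>A. X t) *v c) = (\<Sum>t\<in>A. c \<bullet> (X t *v c))"
  by (induction A rule: finite_induct) (auto simp: matrix_vector_mult_add_rdistrib inner_add_right)

lemma qf_scale: "(c::real^'n) \<bullet> ((r *\<^sub>R X) *v c) = r * (c \<bullet> (X *v c))"
  by (metis inner_scaleR_right scaleR_matrix_vector_assoc)

lemma qf_locmat: "(c::real^2) \<bullet> (locmat a *v c) = (c$1 + a * c$2)^2"
  by (simp add: locmat_def inner_vec_def matrix_vector_mult_def sum_2 power2_eq_square algebra_simps)

lemma qf_Smat: "(c::real^2) \<bullet> (Smat K h T x *v c) =
   (1 / real T) * (\<Sum>t = 1..T. Kh K h (real t / real T - x) * (c$1 + ((real t / real T - x) / h) * c$2)^2)"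
  unfolding Smat_def qf_scale qf_sum[OF finite_atLeastAtMost] by (simp add: qf_scale qf_locmat)

lemma norm2_2: "(norm (c::real^2))^2 = (c$1)^2 + (c$2)^2"
  by (simp add: norm_vec_def L2_set_def sum_2)



lemma sq_diff_le: "((p::real) - q)^2 \<le> 2 * p^2 + 2 * q^2"
proof -
  have "0 \<le> (p + q)^2" by simp
  then show ?thesis unfolding power2_diff power2_sum by linarith
qed

lemma two_point:
  fixes a b u v r :: real
  assumes "\<bar>u\<bar> \<le> 1" "\<bar>v\<bar> \<le> 1" "v - u \<ge> r" "r > 0"
  shows "(a + u * b)^2 + (a + v * b)^2 \<ge> r^2 * (a^2 + b^2) / 4"
proof -
  define f where "f = a + u * b"
  define g where "g = a + v * b"
  have e1: "b * (v - u) = g - f" unfolding f_def g_def by algebra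
  have e2: "a * (v - u) = v * f - u * g" unfolding f_def g_def by algebra
  have "(v * f - u * g)^2 \<le> 2 * (v^2 * f^2) + 2 * (u^2 * g^2)"
    using sq_diff_le[of "v * f" "u * g"] by (simp add: power_mult_distrib)
  also have "\<dots> \<le> 2 * f^2 + 2 * g^2"
  proof -
    have "v^2 \<le> 1" "u^2 \<le> 1" using assms(1,2) abs_square_le_1 by blast+
    then have "v^2 * f^2 \<le> 1 * f^2" "u^2 * g^2 \<le> 1 * g^2"
      by (intro mult_right_mono; simp)+
    then show ?thesis by linarith
  qed
  finally have h2: "(a * (v - u))^2 \<le> 2 * f^2 + 2 * g^2" using e2 by simp
  have h1: "(b * (v - u))^2 \<le> 2 * f^2 + 2 * g^2" unfolding e1
    using sq_diff_le[of g f] by simp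
  have "r^2 \<le> (v - u)^2" using assms by (simp add: power_mono)
  then have "r^2 * (a^2 + b^2) \<le> (v-u)^2 * (a^2+b^2)" by (simp add: mult_right_mono)
  also have "\<dots> = (a * (v - u))^2 + (b * (v - u))^2" by (simp only: power_mult_distrib; algebra)
  also have "\<dots> \<le> 4 * (f^2 + g^2)" using h1 h2 by simp
  finally show ?thesis unfolding f_def g_def by simp
qed

lemma count_int:
  fixes y z :: real and T :: nat
  assumes "1 \<le> y" "z \<le> real T"
  shows "real (card {t \<in> {1..T}. y \<le> real t \<and> real t \<le> z}) \<ge> z - y - 1"
proof (cases "z < y + 1")
  case True then show ?thesis by simp
next
  case False
  let ?a = "nat \<lceil>y\<rceil>" and ?b = "nat \<lfloor>z\<rfloor>"
  have sub: "{?a..?b} \<subseteq> {t \<in> {1..T}. y \<le> real t \<and> real t \<le> z}"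
  proof
    fix t assume "t \<in> {?a..?b}"
    then have "?a \<le> t" "t \<le> ?b" by auto
    moreover have "y \<le> real ?a" using assms by linarith
    moreover have "real ?b \<le> z" using False assms by linarith
    moreover have "real ?b \<le> real T" using False assms by linarith
    ultimately show "t \<in> {t \<in> {1..T}. y \<le> real t \<and> real t \<le> z}" using assms
      by (auto; linarith)
  qed
  have "card {?a..?b} \<le> card {t \<in> {1..T}. y \<le> real t \<and> real t \<le> z}"
    by (rule card_mono[OF _ sub]) simp
  moreover have "real (card {?a..?b}) \<ge> z - y - 1"
    using False assms by (simp; linarith)
  ultimately show ?thesis by linarith
qed



lemma count_sum:
  fixes K g :: "real \<Rightarrow> real" and h x \<alpha> \<rho> m :: real and T :: nat
  assumes K0: "\<And>u. K u \<ge> 0" and g0: "\<And>u. g u \<ge> 0"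
    and Km: "\<And>u. u \<in> {\<alpha>..\<alpha>+\<rho>} \<Longrightarrow> K u * g u \<ge> m"
    and m0: "m \<ge> 0" and hp: "h > 0" and rp: "\<rho> > 0"
    and Th: "real T * h * \<rho> \<ge> 2"
    and lo: "1 / real T \<le> x + h * \<alpha>" and hi: "x + h * (\<alpha> + \<rho>) \<le> 1"
  shows "(1 / real T) * (\<Sum>t = 1..T. Kh K h (real t / real T - x) * g ((real t / real T - x) / h)) \<ge> m * \<rho> / 2"
proof -
  have Tp: "real T > 0" using Th hp rp by (cases "T = 0") auto
  define y where "y = real T * (x + h * \<alpha>)"
  define z where "z = real T * (x + h * (\<alpha> + \<rho>))"
  define A where "A = {t \<in> {1..T}. y \<le> real t \<and> real t \<le> z}"
  define F where "F t = Kh K h (real t / real T - x) * g ((real t / real T - x) / h)" for t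
  have y1: "1 \<le> y" using lo Tp unfolding y_def by (simp add: divide_le_eq mult.commute)
  have zT: "z \<le> real T" using hi Tp unfolding z_def by (simp add: mult_le_cancel_left1)
  have cardA: "real (card A) \<ge> z - y - 1" unfolding A_def using count_int[OF y1 zT] .
  have zy: "z - y = real T * h * \<rho>" unfolding z_def y_def by (simp add: algebra_simps)
  have F0: "F t \<ge> 0" for t unfolding F_def Kh_def using K0 g0 hp by simp
  have FA: "F t \<ge> m / h" if "t \<in> A" for t
  proof -
    have "y \<le> real t" "real t \<le> z" using that unfolding A_def by auto
    then have "x + h * \<alpha> \<le> real t / real T" "real t / real T \<le> x + h * (\<alpha> + \<rho>)"
      unfolding y_def z_def pos_le_divide_eq[OF Tp] pos_divide_le_eq[OF Tp] by (simp_all add: mult.commute)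
    then have "\<alpha> \<le> (real t / real T - x) / h" "(real t / real T - x) / h \<le> \<alpha> + \<rho>"
      unfolding pos_le_divide_eq[OF hp] pos_divide_le_eq[OF hp] by (simp_all add: mult.commute)
    then have "K ((real t / real T - x) / h) * g ((real t / real T - x) / h) \<ge> m"
      using Km by auto
    then show ?thesis unfolding F_def Kh_def using hp by (simp add: divide_right_mono)
  qed
  have "(\<Sum>t\<in>A. F t) \<le> (\<Sum>t = 1..T. F t)"
    by (rule sum_mono2) (auto simp: A_def F0)
  moreover have "(\<Sum>t\<in>A. F t) \<ge> real (card A) * (m / h)"
    using sum_mono[of A "\<lambda>_. m / h" F] FA by simp
  moreover have "real (card A) * (m / h) \<ge> (real T * h * \<rho> / 2) * (m / h)"
    using cardA zy Th hp m0 by (intro mult_right_mono) auto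
  ultimately have "(\<Sum>t = 1..T. F t) \<ge> (real T * h * \<rho> / 2) * (m / h)" by linarith
  then have "(1 / real T) * (\<Sum>t = 1..T. F t) \<ge> (1 / real T) * ((real T * h * \<rho> / 2) * (m / h))"
    using Tp by (simp add: divide_right_mono)
  also have "(1 / real T) * ((real T * h * \<rho> / 2) * (m / h)) = m * \<rho> / 2"
    using Tp hp by (simp add: field_simps)
  finally show ?thesis unfolding F_def by simp
qed

lemma core_q:
  fixes K :: "real \<Rightarrow> real" and h x p r \<delta> :: real and T :: nat and c :: "real^2"
  assumes K0: "\<And>u. K u \<ge> 0"
    and Kd: "\<And>u. u \<in> {p-r..p+r} \<Longrightarrow> K u \<ge> \<delta>"
    and dp: "\<delta> > 0" and rp: "r > 0" and pl: "-1 \<le> p - r" and pu: "p + r \<le> 1"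
    and hp: "h > 0" and Th: "real T * h * r \<ge> 4"
    and lo: "1 / real T \<le> x + h * (p - r)" and hi: "x + h * (p + r) \<le> 1"
  shows "c \<bullet> (Smat K h T x *v c) \<ge> \<delta> * r^3 / 32 * (norm c)^2"
proof -
  define N where "N = (norm c)^2"
  have N: "N = (c$1)^2 + (c$2)^2" unfolding N_def by (rule norm2_2)
  define \<kappa> where "\<kappa> = r^2 * N / 8"
  have kp: "\<kappa> \<ge> 0" unfolding \<kappa>_def N_def by simp
  define g where "g u = (c$1 + u * c$2)^2" for u
  have g0: "g u \<ge> 0" for u unfolding g_def by simp
  have q: "c \<bullet> (Smat K h T x *v c) = (1 / real T) * (\<Sum>t = 1..T. Kh K h (real t / real T - x) * g ((real t / real T - x) / h))"
    unfolding qf_Smat g_def ..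
  have res: "\<delta> * \<kappa> * (r/2) / 2 = \<delta> * r^3 / 32 * (norm c)^2"
    unfolding \<kappa>_def N_def by (simp add: power3_eq_cube power2_eq_square field_simps)
  have dich: "(\<forall>u\<in>{p-r..p-r+r/2}. g u \<ge> \<kappa>) \<or> (\<forall>u\<in>{p+r/2..p+r/2+r/2}. g u \<ge> \<kappa>)"
  proof (rule ccontr)
    assume "\<not> ?thesis"
    then obtain u v where u: "u \<in> {p-r..p-r+r/2}" "g u < \<kappa>" and v: "v \<in> {p+r/2..p+r/2+r/2}" "g v < \<kappa>"
      by (auto simp: not_le)
    have "g u + g v \<ge> r^2 * N / 4" unfolding g_def N
      using two_point[of u v r "c$1" "c$2"] u v pl pu rp by auto
    then show False using u v unfolding \<kappa>_def by simp
  qed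
  have Th2: "real T * h * (r/2) \<ge> 2" using Th by simp
  from dich show ?thesis
  proof
    assume H: "\<forall>u\<in>{p-r..p-r+r/2}. g u \<ge> \<kappa>"
    have "(1 / real T) * (\<Sum>t = 1..T. Kh K h (real t / real T - x) * g ((real t / real T - x) / h)) \<ge> \<delta> * \<kappa> * (r/2) / 2"
    proof (rule count_sum[OF K0 g0 _ _ hp _ Th2])
      fix u assume "u \<in> {p-r..p-r+r/2}"
      then show "K u * g u \<ge> \<delta> * \<kappa>" using H Kd[of u] dp kp by (intro mult_mono) auto
    next
      have "h * (p - r + r / 2) \<le> h * (p + r)" by (rule mult_left_mono) (use rp hp in auto)
      then show "x + h * (p - r + r / 2) \<le> 1" using hi by linarith
    qed (use dp kp rp lo in auto)
    then show ?thesis using q res by linarith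
  next
    assume H: "\<forall>u\<in>{p+r/2..p+r/2+r/2}. g u \<ge> \<kappa>"
    have "(1 / real T) * (\<Sum>t = 1..T. Kh K h (real t / real T - x) * g ((real t / real T - x) / h)) \<ge> \<delta> * \<kappa> * (r/2) / 2"
    proof (rule count_sum[OF K0 g0 _ _ hp _ Th2])
      fix u assume "u \<in> {p+r/2..p+r/2+r/2}"
      then show "K u * g u \<ge> \<delta> * \<kappa>" using H Kd[of u] dp kp by (intro mult_mono) auto
    next
      have "h * (p - r) \<le> h * (p + r / 2)" by (rule mult_left_mono) (use rp hp in auto)
      then show "1 / real T \<le> x + h * (p + r / 2)" using lo by linarith
    next
      show "x + h * (p + r / 2 + r / 2) \<le> 1" using hi by (simp add: add.commute)
    qed (use dp kp rp in auto)
    then show ?thesis using q res by linarith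
  qed
qed



lemma pos_point:
  fixes K :: "real \<Rightarrow> real"
  assumes "emeasure lborel {u \<in> {a..b}. K u > 0} > 0"
  shows "\<exists>p. a < p \<and> p < b \<and> K p > 0"
proof (rule ccontr)
  assume "\<not> ?thesis"
  then have "{u \<in> {a..b}. K u > 0} \<subseteq> {a, b}" by force
  then have "countable {u \<in> {a..b}. K u > 0}" by (rule countable_subset) simp
  then have "emeasure lborel {u \<in> {a..b}. K u > 0} = 0" by (rule emeasure_lborel_countable)
  with assms show False by simp
qed

lemma loc_pos:
  fixes K :: "real \<Rightarrow> real"
  assumes Kp: "K p > 0" and L: "\<And>u u'. \<bar>K u - K u'\<bar> \<le> \<Lambda> * \<bar>u - u'\<bar>" and L1: "\<Lambda> \<ge> 1"
    and rho: "\<rho> > 0"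
  shows "\<exists>r. 0 < r \<and> r \<le> \<rho> \<and> (\<forall>u\<in>{p-r..p+r}. K u \<ge> K p / 2)"
proof -
  define r where "r = min \<rho> (K p / (2 * \<Lambda>))"
  have rp: "r > 0" unfolding r_def using rho Kp L1 by simp
  have "K u \<ge> K p / 2" if "u \<in> {p-r..p+r}" for u
  proof -
    have "\<bar>u - p\<bar> \<le> r" using that by auto
    then have "\<Lambda> * \<bar>u - p\<bar> \<le> \<Lambda> * r" using L1 by (intro mult_left_mono) auto
    also have "\<Lambda> * r \<le> \<Lambda> * (K p / (2 * \<Lambda>))" using L1 unfolding r_def by (intro mult_left_mono) auto
    also have "\<dots> = K p / 2" using L1 by simp
    finally show ?thesis using L[of u p] by linarith
  qed
  then show ?thesis using rp by (intro exI[of _ r]) (auto simp: r_def)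
qed

lemma inv_bound:
  fixes S :: "real^2^2" and lam :: real
  assumes lp: "lam > 0" and Q: "\<And>c. c \<bullet> (S *v c) \<ge> lam * (norm c)^2"
  shows "invertible S \<and> (\<forall>v :: real^2. norm (matrix_inv S *v v) \<le> norm v / lam)"
proof -
  have "\<forall>x. S *v x = 0 \<longrightarrow> x = 0"
  proof (intro allI impI)
    fix x assume "S *v x = 0"
    then have "lam * (norm x)^2 \<le> 0" using Q[of x] by simp
    then have "(norm x)^2 \<le> 0" using lp by (simp add: mult_le_0_iff)
    then show "x = 0" by simp
  qed
  then have inv: "invertible S"
    unfolding invertible_left_inverse matrix_left_invertible_ker by blast
  then have SI: "S ** matrix_inv S = mat 1"
    unfolding matrix_inv_def invertible_def by (rule someI2_ex) blast
  have "norm (matrix_inv S *v v) \<le> norm v / lam" for v :: "real^2"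
  proof -
    define w where "w = matrix_inv S *v v"
    have Sw: "S *v w = v" unfolding w_def matrix_vector_mul_assoc SI by simp
    have "lam * (norm w)^2 \<le> w \<bullet> v" using Q[of w] Sw by simp
    also have "\<dots> \<le> norm w * norm v" by (rule norm_cauchy_schwarz)
    finally have h: "lam * norm w * norm w \<le> norm v * norm w" by (simp add: power2_eq_square mult.commute mult.left_commute)
    show ?thesis
    proof (cases "norm w = 0")
      case True then show ?thesis using lp w_def by simp
    next
      case False
      then have "lam * norm w \<le> norm v" using h by simp
      then show ?thesis unfolding w_def using lp by (simp add: pos_le_divide_eq mult.commute)
    qed
  qed
  with inv show ?thesis by blast
qed

theorem lemma7:
  fixes K :: "real \<Rightarrow> real" and h :: "nat \<Rightarrow> real"
    and Kbar s \<Lambda>1 :: real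
  assumes K_nonneg: "\<And>u. K u \<ge> 0"
    and K_bdd: "\<And>u. \<bar>K u\<bar> \<le> Kbar"
    and s_gt: "s > 2"
    and K_Ls: "(\<lambda>u. \<bar>K u\<bar> powr s) integrable_on UNIV"
    and K_supp: "\<And>u. \<bar>u\<bar> > 1 \<Longrightarrow> K u = 0"
    and Lambda_ge: "1 \<le> \<Lambda>1"
    and K_Lip: "\<And>u u'. \<bar>K u - K u'\<bar> \<le> \<Lambda>1 * \<bar>u - u'\<bar>"
    and K_pos: "\<And>x. x \<in> {0..1} \<Longrightarrow> emeasure lborel {u \<in> Gset x. K u > 0} > 0"
    and h_pos: "\<And>T. h T > 0"
    and h_lim: "h \<longlonglongrightarrow> 0"
    and Th_lim: "filterlim (\<lambda>T. real T * h T) at_top sequentially"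
  shows "\<exists>lam0 > 0. \<forall>\<^sub>F T in sequentially. \<forall>x \<in> {0..1}.
           invertible (Smat K (h T) T x) \<and>
           (\<forall>v :: real^2. norm (matrix_inv (Smat K (h T) T x) *v v) \<le> norm v / lam0)"
proof -
  have "emeasure lborel {u \<in> {0..1}. K u > 0} > 0" using K_pos[of 0] by (simp add: Gset_def)
  then obtain p1 where p1: "0 < p1" "p1 < 1" "K p1 > 0" using pos_point by blast
  have "emeasure lborel {u \<in> {-1..0}. K u > 0} > 0" using K_pos[of 1] by (simp add: Gset_def)
  then obtain p2 where p2: "-1 < p2" "p2 < 0" "K p2 > 0" using pos_point by blast
  obtain r1 where r1: "0 < r1" "r1 \<le> min (p1/2) (1 - p1)" "\<forall>u\<in>{p1-r1..p1+r1}. K u \<ge> K p1 / 2"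
    using loc_pos[OF p1(3) K_Lip Lambda_ge, of "min (p1/2) (1 - p1)"] p1 by auto
  obtain r2 where r2: "0 < r2" "r2 \<le> min (-p2/2) (1 + p2)" "\<forall>u\<in>{p2-r2..p2+r2}. K u \<ge> K p2 / 2"
    using loc_pos[OF p2(3) K_Lip Lambda_ge, of "min (-p2/2) (1 + p2)"] p2 by auto
  define d1 where "d1 = K p1 / 2"
  define d2 where "d2 = K p2 / 2"
  define lam where "lam = min (d1 * r1^3 / 32) (d2 * r2^3 / 32)"
  have lp: "lam > 0" unfolding lam_def d1_def d2_def using p1 p2 r1 r2 by simp
  define C where "C = max (4 / r1) (max (4 / r2) (2 / p1))"
  have ev1: "\<forall>\<^sub>F T in sequentially. real T * h T \<ge> C"
    using Th_lim by (simp add: filterlim_at_top)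
  have ev2: "\<forall>\<^sub>F T in sequentially. h T < 1/4"
    using order_tendstoD(2)[OF h_lim, of "1/4"] by simp
  have ev3: "\<forall>\<^sub>F T in sequentially. T \<ge> 4" by (rule eventually_ge_at_top)
  have "\<forall>\<^sub>F T in sequentially. \<forall>x \<in> {0..1}.
           invertible (Smat K (h T) T x) \<and>
           (\<forall>v :: real^2. norm (matrix_inv (Smat K (h T) T x) *v v) \<le> norm v / lam)"
    using ev1 ev2 ev3
  proof eventually_elim
    case (elim T)
    have hp: "h T > 0" by (rule h_pos)
    have T4: "real T \<ge> 4" using elim(3) by simp
    have Th1: "real T * h T * r1 \<ge> 4"
    proof -
      have "4 / r1 \<le> real T * h T" using elim(1) unfolding C_def by linarith
      then show ?thesis using r1(1) by (simp add: pos_divide_le_eq)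
    qed
    have Th2: "real T * h T * r2 \<ge> 4"
    proof -
      have "4 / r2 \<le> real T * h T" using elim(1) unfolding C_def by linarith
      then show ?thesis using r2(1) by (simp add: pos_divide_le_eq)
    qed
    have Th3: "1 / real T \<le> h T * (p1 / 2)"
    proof -
      have "2 / p1 \<le> real T * h T" using elim(1) unfolding C_def by linarith
      then have "2 \<le> real T * h T * p1" using p1(1) by (simp add: pos_divide_le_eq)
      then show ?thesis using T4 by (simp add: divide_le_eq field_simps)
    qed
    show ?case
    proof
      fix x :: real assume x: "x \<in> {0..1}"
      have Q: "c \<bullet> (Smat K (h T) T x *v c) \<ge> lam * (norm c)^2" for c :: "real^2"
      proof (cases "x \<le> 1/2")
        case True
        have "c \<bullet> (Smat K (h T) T x *v c) \<ge> d1 * r1^3 / 32 * (norm c)^2"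
        proof (rule core_q[OF K_nonneg _ _ r1(1) _ _ hp Th1])
          show "d1 \<le> K u" if "u \<in> {p1 - r1..p1 + r1}" for u
            using r1(3) that unfolding d1_def by blast
          show "0 < d1" using p1 d1_def by simp
          show "-1 \<le> p1 - r1" "p1 + r1 \<le> 1" using r1 p1 by auto
          have "h T * (p1 / 2) \<le> h T * (p1 - r1)" using r1 hp by (intro mult_left_mono) auto
          then show "1 / real T \<le> x + h T * (p1 - r1)" using Th3 x by auto
          have "h T * (p1 + r1) \<le> h T * 1" using r1 hp by (intro mult_left_mono) auto
          then show "x + h T * (p1 + r1) \<le> 1" using True elim(2) by auto
        qed
        moreover have "lam * (norm c)^2 \<le> d1 * r1^3 / 32 * (norm c)^2"
          unfolding lam_def by (intro mult_right_mono) auto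
        ultimately show ?thesis by linarith
      next
        case False
        have "c \<bullet> (Smat K (h T) T x *v c) \<ge> d2 * r2^3 / 32 * (norm c)^2"
        proof (rule core_q[OF K_nonneg _ _ r2(1) _ _ hp Th2])
          show "d2 \<le> K u" if "u \<in> {p2 - r2..p2 + r2}" for u
            using r2(3) that unfolding d2_def by blast
          show "0 < d2" using p2 d2_def by simp
          show "-1 \<le> p2 - r2" "p2 + r2 \<le> 1" using r2 p2 by auto
          have "h T * (-1) \<le> h T * (p2 - r2)" using r2 hp by (intro mult_left_mono) auto
          moreover have "1 / real T \<le> 1/4" using T4 by simp
          ultimately show "1 / real T \<le> x + h T * (p2 - r2)" using False elim(2) by auto
          have "h T * (p2 + r2) \<le> h T * 0" using r2 hp by (intro mult_left_mono) auto
          then show "x + h T * (p2 + r2) \<le> 1" using x by auto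
        qed
        moreover have "lam * (norm c)^2 \<le> d2 * r2^3 / 32 * (norm c)^2"
          unfolding lam_def by (intro mult_right_mono) auto
        ultimately show ?thesis by linarith
      qed
      show "invertible (Smat K (h T) T x) \<and>
           (\<forall>v :: real^2. norm (matrix_inv (Smat K (h T) T x) *v v) \<le> norm v / lam)"
        by (rule inv_bound[OF lp Q])
    qed
  qed
  then show ?thesis using lp by blast
qed

end
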